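(* If $G$ is a band, then $\chi(G)\le\lceil\frac54\omega(G)\rceil$.
   Context: Two disjoint sets $P,R$ form a graded pair if for any $p,p'\in P$, $N(p)\cap R\subseteq N(p')\cap R$ or $N(p')\cap R\subseteq N(p)\cap R$. A band is a graph whose vertex set is partitioned into seven sets $Q_1,\dots,Q_5,R_2,R_3$ such that: each is a clique; $Q_5$ is complete to $Q_1\cup Q_4$, $R_2$ is complete to $Q_1\cup Q_2\cup Q_3$, $R_3$ is complete to $Q_2\cup Q_3\cup Q_4$, $Q_2$ is complete to $Q_3$; $Q_1$ is anticomplete to $Q_3\cup R_3\cup Q_4$, $Q_4$ is anticomplete to $Q_1\cup Q_2\cup R_2$, $Q_5$ is anticomplete to $Q_2\cup R_2\cup Q_3\cup R_3$; and the pairs $\{Q_1,Q_2\}$, $\{Q_3,Q_4\}$, $\{R_2,R_3\}$ are graded. Complete/anticomplete: all edges / no edges between the sets. *)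

theory Defs
  imports Complex_Main
begin

definition simple_graph :: "'a set \<Rightarrow> ('a \<Rightarrow> 'a \<Rightarrow> bool) \<Rightarrow> bool" where
  "simple_graph V E \<longleftrightarrow> finite V \<and> (\<forall>x y. E x y \<longrightarrow> x \<in> V \<and> y \<in> V)
     \<and> (\<forall>x y. E x y \<longrightarrow> E y x) \<and> (\<forall>x. \<not> E x x)"

definition is_clique :: "('a \<Rightarrow> 'a \<Rightarrow> bool) \<Rightarrow> 'a set \<Rightarrow> bool" where
  "is_clique E K \<longleftrightarrow> (\<forall>x\<in>K. \<forall>y\<in>K. x \<noteq> y \<longrightarrow> E x y)"

definition complete_to :: "('a \<Rightarrow> 'a \<Rightarrow> bool) \<Rightarrow> 'a set \<Rightarrow> 'a set \<Rightarrow> bool" where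
  "complete_to E A B \<longleftrightarrow> (\<forall>a\<in>A. \<forall>b\<in>B. E a b)"

definition anticomplete_to :: "('a \<Rightarrow> 'a \<Rightarrow> bool) \<Rightarrow> 'a set \<Rightarrow> 'a set \<Rightarrow> bool" where
  "anticomplete_to E A B \<longleftrightarrow> (\<forall>a\<in>A. \<forall>b\<in>B. \<not> E a b)"

definition nbhd :: "('a \<Rightarrow> 'a \<Rightarrow> bool) \<Rightarrow> 'a \<Rightarrow> 'a set" where
  "nbhd E v = {u. E v u}"

definition graded :: "('a \<Rightarrow> 'a \<Rightarrow> bool) \<Rightarrow> 'a set \<Rightarrow> 'a set \<Rightarrow> bool" where
  "graded E P R \<longleftrightarrow> P \<inter> R = {} \<and>
     (\<forall>p\<in>P. \<forall>p'\<in>P. nbhd E p \<inter> R \<subseteq> nbhd E p' \<inter> R \<or> nbhd E p' \<inter> R \<subseteq> nbhd E p \<inter> R)"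

definition is_band :: "'a set \<Rightarrow> ('a \<Rightarrow> 'a \<Rightarrow> bool) \<Rightarrow> bool" where
  "is_band V E \<longleftrightarrow> (\<exists>Q1 Q2 Q3 Q4 Q5 R2 R3.
     V = Q1 \<union> Q2 \<union> Q3 \<union> Q4 \<union> Q5 \<union> R2 \<union> R3 \<and>
     Q1 \<inter> Q2 = {} \<and> Q1 \<inter> Q3 = {} \<and> Q1 \<inter> Q4 = {} \<and> Q1 \<inter> Q5 = {} \<and> Q1 \<inter> R2 = {} \<and> Q1 \<inter> R3 = {} \<and>
     Q2 \<inter> Q3 = {} \<and> Q2 \<inter> Q4 = {} \<and> Q2 \<inter> Q5 = {} \<and> Q2 \<inter> R2 = {} \<and> Q2 \<inter> R3 = {} \<and>
     Q3 \<inter> Q4 = {} \<and> Q3 \<inter> Q5 = {} \<and> Q3 \<inter> R2 = {} \<and> Q3 \<inter> R3 = {} \<and>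
     Q4 \<inter> Q5 = {} \<and> Q4 \<inter> R2 = {} \<and> Q4 \<inter> R3 = {} \<and>
     Q5 \<inter> R2 = {} \<and> Q5 \<inter> R3 = {} \<and> R2 \<inter> R3 = {} \<and>
     is_clique E Q1 \<and> is_clique E Q2 \<and> is_clique E Q3 \<and> is_clique E Q4 \<and> is_clique E Q5 \<and>
     is_clique E R2 \<and> is_clique E R3 \<and>
     complete_to E Q5 (Q1 \<union> Q4) \<and>
     complete_to E R2 (Q1 \<union> Q2 \<union> Q3) \<and>
     complete_to E R3 (Q2 \<union> Q3 \<union> Q4) \<and>
     complete_to E Q2 Q3 \<and>
     anticomplete_to E Q1 (Q3 \<union> R3 \<union> Q4) \<and>
     anticomplete_to E Q4 (Q1 \<union> Q2 \<union> R2) \<and>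
     anticomplete_to E Q5 (Q2 \<union> R2 \<union> Q3 \<union> R3) \<and>
     graded E Q1 Q2 \<and> graded E Q3 Q4 \<and> graded E R2 R3)"

definition proper_colouring :: "'a set \<Rightarrow> ('a \<Rightarrow> 'a \<Rightarrow> bool) \<Rightarrow> nat \<Rightarrow> ('a \<Rightarrow> nat) \<Rightarrow> bool" where
  "proper_colouring V E k c \<longleftrightarrow> (\<forall>v\<in>V. c v < k) \<and> (\<forall>u\<in>V. \<forall>v\<in>V. E u v \<longrightarrow> c u \<noteq> c v)"

definition chromatic_number :: "'a set \<Rightarrow> ('a \<Rightarrow> 'a \<Rightarrow> bool) \<Rightarrow> nat" where
  "chromatic_number V E = (LEAST k. \<exists>c. proper_colouring V E k c)"

definition clique_number :: "'a set \<Rightarrow> ('a \<Rightarrow> 'a \<Rightarrow> bool) \<Rightarrow> nat" where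
  "clique_number V E = Max {card K | K. K \<subseteq> V \<and> is_clique E K}"

end

theory Submission
  imports Defs
begin


definition CS :: "int \<Rightarrow> int \<Rightarrow> int \<Rightarrow> nat set" where
  "CS k s l = (\<lambda>i. nat (i mod k)) ` {s..<s+l}"

lemma mod_window_eq:
  fixes i j k x :: int
  assumes "0 < k" "x \<le> i" "i < x + k" "x \<le> j" "j < x + k" "i mod k = j mod k"
  shows "i = j"
proof (rule ccontr)
  assume ne: "i \<noteq> j"
  have "k dvd (i - j)" using assms(6) by (simp add: mod_eq_dvd_iff)
  then have "\<bar>k\<bar> \<le> \<bar>i - j\<bar>" using ne dvd_imp_le_int by simp
  then show False using assms by linarith
qed

lemma nat_mod_eq:
  fixes i j k :: int
  assumes "0 < k" "nat (i mod k) = nat (j mod k)"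
  shows "i mod k = j mod k"
proof -
  have "0 \<le> i mod k" "0 \<le> j mod k" using assms by auto
  then show ?thesis using assms(2) by simp
qed

lemma cs_lt: "0 < k \<Longrightarrow> c \<in> CS k s l \<Longrightarrow> c < nat k"
  unfolding CS_def by auto

lemma cs_finite: "finite (CS k s l)"
  unfolding CS_def by simp

lemma cs_card:
  assumes "0 < k" "0 \<le> l" "l \<le> k"
  shows "card (CS k s l) = nat l"
proof -
  have "inj_on (\<lambda>i. nat (i mod k)) {s..<s+l}"
  proof (rule inj_onI)
    fix i j assume "i \<in> {s..<s+l}" "j \<in> {s..<s+l}" "nat (i mod k) = nat (j mod k)"
    then show "i = j" using mod_window_eq[of k s i j] nat_mod_eq[OF assms(1)] assms by auto
  qed
  then show ?thesis unfolding CS_def by (simp add: card_image)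
qed

lemma cs_disj:
  assumes "0 < k" "x + lx \<le> y" "y + ly \<le> x + k"
  shows "CS k x lx \<inter> CS k y ly = {}"
proof (rule ccontr)
  assume "CS k x lx \<inter> CS k y ly \<noteq> {}"
  then obtain c where c: "c \<in> CS k x lx" "c \<in> CS k y ly" by blast
  obtain i where i: "i \<in> {x..<x+lx}" "c = nat (i mod k)" using c(1) unfolding CS_def by blast
  obtain j where j: "j \<in> {y..<y+ly}" "c = nat (j mod k)" using c(2) unfolding CS_def by blast
  have ij: "i \<in> {x..<x+lx}" "j \<in> {y..<y+ly}" "nat (i mod k) = nat (j mod k)" using i j by auto
  have "i = j" using mod_window_eq[of k x i j] nat_mod_eq[OF assms(1) ij(3)] ij assms by auto
  then show False using ij assms by auto
qed

lemma cs_ov: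
  assumes "0 < k" "x \<le> y" "y + ly \<le> x + k" "lx \<le> k"
  shows "card (CS k x lx \<inter> CS k y ly) \<le> nat (x + lx - y)"
proof -
  have "CS k x lx \<inter> CS k y ly \<subseteq> (\<lambda>i. nat (i mod k)) ` {y..<x+lx}"
  proof
    fix c assume "c \<in> CS k x lx \<inter> CS k y ly"
    then obtain i where i: "i \<in> {x..<x+lx}" "c = nat (i mod k)" unfolding CS_def by blast
    obtain j where j: "j \<in> {y..<y+ly}" "c = nat (j mod k)" using \<open>c \<in> CS k x lx \<inter> CS k y ly\<close> unfolding CS_def by blast
    have ij: "i \<in> {x..<x+lx}" "j \<in> {y..<y+ly}" "c = nat (i mod k)" "c = nat (j mod k)" using i j by auto
    have "i = j" using mod_window_eq[of k x i j] nat_mod_eq[OF assms(1)] ij assms by auto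
    then show "c \<in> (\<lambda>i. nat (i mod k)) ` {y..<x+lx}" using ij by auto
  qed
  then have "card (CS k x lx \<inter> CS k y ly) \<le> card ((\<lambda>i. nat (i mod k)) ` {y..<x+lx})"
    by (intro card_mono) auto
  also have "\<dots> \<le> card {y..<x+lx}" by (rule card_image_le) simp
  finally show ?thesis by simp
qed

lemma real0:
  assumes "finite P" "finite X" "card X = card P"
  shows "\<exists>c. inj_on c P \<and> c ` P \<subseteq> X"
proof -
  obtain h where "bij_betw h P X" using finite_same_card_bij assms by metis
  then show ?thesis unfolding bij_betw_def by blast
qed

lemma real_pair:
  assumes fP: "finite P" and fR: "finite R" and P0: "P0 \<subseteq> P" and inj: "inj_on \<mu> P0"
    and mu: "\<mu> ` P0 \<subseteq> R" and ne: "\<forall>p\<in>P0. \<not> E p (\<mu> p)"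
    and fX: "finite XP" "finite XR" and cX: "card XP = card P" "card XR = card R"
    and ov: "card (XP \<inter> XR) \<le> card P0"
  shows "\<exists>cP cR. inj_on cP P \<and> cP ` P \<subseteq> XP \<and> inj_on cR R \<and> cR ` R \<subseteq> XR \<and>
           (\<forall>p\<in>P. \<forall>r\<in>R. cP p = cR r \<longrightarrow> \<not> E p r)"
proof -
  define OV where "OV = XP \<inter> XR"
  have fO: "finite OV" using fX OV_def by auto
  obtain P1 where P1: "P1 \<subseteq> P0" "card P1 = card OV" "finite P1"
    using obtain_subset_with_card_n[of "card OV" P0] ov OV_def by metis
  obtain \<beta> where bet: "bij_betw \<beta> P1 OV" using finite_same_card_bij P1 fO by metis
  have P1P: "P1 \<subseteq> P" using P1 P0 by auto
  have OXP: "OV \<subseteq> XP" "OV \<subseteq> XR" using OV_def by auto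
  have c1: "card (P - P1) = card (XP - OV)"
    using card_Diff_subset[OF P1(3) P1P] card_Diff_subset[OF fO OXP(1)] cX P1 by simp
  obtain h1 where h1: "bij_betw h1 (P - P1) (XP - OV)"
    using finite_same_card_bij[of "P - P1" "XP - OV"] c1 fP fX by auto
  define R1 where "R1 = \<mu> ` P1"
  have injP1: "inj_on \<mu> P1" using inj P1 inj_on_subset by blast
  have R1R: "R1 \<subseteq> R" using R1_def mu P1 by auto
  have fR1: "finite R1" using R1_def P1 by auto
  have cR1: "card R1 = card P1" using R1_def injP1 by (simp add: card_image)
  have c2: "card (R - R1) = card (XR - OV)"
    using card_Diff_subset[OF fR1 R1R] card_Diff_subset[OF fO OXP(2)] cX P1 cR1 by simp
  obtain h2 where h2: "bij_betw h2 (R - R1) (XR - OV)"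
    using finite_same_card_bij[of "R - R1" "XR - OV"] c2 fR fX by auto
  define cP where "cP p = (if p \<in> P1 then \<beta> p else h1 p)" for p
  define cR where "cR r = (if r \<in> R1 then \<beta> (inv_into P1 \<mu> r) else h2 r)" for r
  have bimg: "\<beta> p \<in> OV" if "p \<in> P1" for p by (rule bij_betw_apply[OF bet that])
  have h1img: "h1 p \<in> XP - OV" if "p \<in> P - P1" for p by (rule bij_betw_apply[OF h1 that])
  have h2img: "h2 r \<in> XR - OV" if "r \<in> R - R1" for r by (rule bij_betw_apply[OF h2 that])
  have invP1: "inv_into P1 \<mu> r \<in> P1" if "r \<in> R1" for r
    using that unfolding R1_def by (rule inv_into_into)
  have cRmu: "cR (\<mu> p) = \<beta> p" if "p \<in> P1" for p
  proof -
    have "\<mu> p \<in> R1" using that R1_def by blast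
    then have "cR (\<mu> p) = \<beta> (inv_into P1 \<mu> (\<mu> p))" using cR_def by simp
    also have "inv_into P1 \<mu> (\<mu> p) = p" using inv_into_f_f[OF injP1 that] .
    finally show ?thesis .
  qed
  have injb: "inj_on \<beta> P1" using bet bij_betw_def by blast
  have injh1: "inj_on h1 (P - P1)" using h1 bij_betw_def by blast
  have injh2: "inj_on h2 (R - R1)" using h2 bij_betw_def by blast
  have cPin: "cP p \<in> OV" if "p \<in> P1" for p using that cP_def bimg[of p] by simp
  have cPout: "cP p \<in> XP - OV" if "p \<in> P" "p \<notin> P1" for p using that cP_def h1img[of p] by simp
  have cRin: "cR r \<in> OV" if "r \<in> R1" for r using that cR_def bimg[OF invP1[OF that]] by simp
  have cRout: "cR r \<in> XR - OV" if "r \<in> R" "r \<notin> R1" for r using that cR_def h2img[of r] by simp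
  have i1: "inj_on cP P"
  proof (rule inj_onI)
    fix x y assume xy: "x \<in> P" "y \<in> P" "cP x = cP y"
    show "x = y"
    proof (cases "x \<in> P1")
      case xin: True
      show ?thesis
      proof (cases "y \<in> P1")
        case True
        then have "\<beta> x = \<beta> y" using xy xin cP_def by simp
        then show ?thesis using injb xin True by (simp add: inj_on_eq_iff)
      next
        case False
        then show ?thesis using cPin[OF xin] cPout[OF xy(2) False] xy(3) by simp
      qed
    next
      case xout: False
      show ?thesis
      proof (cases "y \<in> P1")
        case True
        then show ?thesis using cPin[OF True] cPout[OF xy(1) xout] xy(3) by simp
      next
        case False
        then have "h1 x = h1 y" using xy xout cP_def by simp
        then show ?thesis using injh1 xout False xy by (simp add: inj_on_eq_iff)
      qed
    qed
  qed
  have i2: "cP ` P \<subseteq> XP" using cPin cPout OXP by blast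
  have i3: "inj_on cR R"
  proof (rule inj_onI)
    fix x y assume xy: "x \<in> R" "y \<in> R" "cR x = cR y"
    show "x = y"
    proof (cases "x \<in> R1")
      case xin: True
      show ?thesis
      proof (cases "y \<in> R1")
        case True
        then have "\<beta> (inv_into P1 \<mu> x) = \<beta> (inv_into P1 \<mu> y)" using xy xin cR_def by simp
        then have "inv_into P1 \<mu> x = inv_into P1 \<mu> y"
          using injb invP1[OF xin] invP1[OF True] by (simp add: inj_on_eq_iff)
        then have "\<mu> (inv_into P1 \<mu> x) = \<mu> (inv_into P1 \<mu> y)" by simp
        moreover have "\<mu> (inv_into P1 \<mu> x) = x" using xin R1_def f_inv_into_f by metis
        moreover have "\<mu> (inv_into P1 \<mu> y) = y" using True R1_def f_inv_into_f by metis
        ultimately show ?thesis by simp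
      next
        case False
        then show ?thesis using cRin[OF xin] cRout[OF xy(2) False] xy(3) by simp
      qed
    next
      case xout: False
      show ?thesis
      proof (cases "y \<in> R1")
        case True
        then show ?thesis using cRin[OF True] cRout[OF xy(1) xout] xy(3) by simp
      next
        case False
        then have "h2 x = h2 y" using xy xout cR_def by simp
        then show ?thesis using injh2 xout False xy by (simp add: inj_on_eq_iff)
      qed
    qed
  qed
  have i4: "cR ` R \<subseteq> XR" using cRin cRout OXP by blast
  have i5: "\<forall>p\<in>P. \<forall>r\<in>R. cP p = cR r \<longrightarrow> \<not> E p r"
  proof (intro ballI impI)
    fix p r assume pr: "p \<in> P" "r \<in> R" "cP p = cR r"
    show "\<not> E p r"
    proof (cases "p \<in> P1")
      case True
      then have "cP p \<in> OV" using cPin by simp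
      then have rR1: "r \<in> R1" using pr cRout by (metis Diff_iff)
      then obtain p' where p': "p' \<in> P1" "r = \<mu> p'" using R1_def by auto
      then have "\<beta> p = \<beta> p'" using pr True cP_def cRmu by simp
      then have "p = p'" using injb True p' by (auto dest: inj_onD)
      then show ?thesis using p' ne P1 by auto
    next
      case False
      have "cP p \<in> XP - OV" by (rule cPout[OF pr(1) False])
      moreover have "cR r \<in> XR" using i4 pr by auto
      ultimately show ?thesis using pr OV_def by auto
    qed
  qed
  show ?thesis using i1 i2 i3 i4 i5 by blast
qed



lemma chain_koenig:
  assumes sym: "\<forall>x y. E x y \<longrightarrow> E y x"
  shows "finite P \<Longrightarrow> finite R \<Longrightarrow> P \<inter> R = {} \<Longrightarrow> is_clique E P \<Longrightarrow> is_clique E R \<Longrightarrow>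
    (\<forall>p\<in>P. \<forall>p'\<in>P. nbhd E p \<inter> R \<subseteq> nbhd E p' \<inter> R \<or> nbhd E p' \<inter> R \<subseteq> nbhd E p \<inter> R) \<Longrightarrow>
    \<exists>P0 \<mu> K. P0 \<subseteq> P \<and> inj_on \<mu> P0 \<and> \<mu> ` P0 \<subseteq> R \<and> (\<forall>p\<in>P0. \<not> E p (\<mu> p)) \<and>
       K \<subseteq> P \<union> R \<and> is_clique E K \<and> card P + card R \<le> card K + card P0"
proof (induction "card P + card R" arbitrary: P R rule: less_induct)
  case less
  note fP = less.prems(1) and fR = less.prems(2) and disj = less.prems(3)
    and cP = less.prems(4) and cR = less.prems(5) and ch = less.prems(6)
  show ?case
  proof (cases "P = {}")
    case True
    show ?thesis
      by (rule exI[of _ "{}"], rule exI[of _ id], rule exI[of _ R]) (use True cR in auto)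
  next
    case Pne: False
    show ?thesis
    proof (cases "\<exists>p\<in>P. \<forall>r\<in>R. E p r")
      case True
      then obtain p where p: "p \<in> P" "\<forall>r\<in>R. E p r" by blast
      have lt: "card (P - {p}) + card R < card P + card R"
        using card_Diff1_less[OF fP p(1)] by simp
      have "\<exists>P0 \<mu> K. P0 \<subseteq> P - {p} \<and> inj_on \<mu> P0 \<and> \<mu> ` P0 \<subseteq> R \<and> (\<forall>p\<in>P0. \<not> E p (\<mu> p)) \<and>
       K \<subseteq> (P - {p}) \<union> R \<and> is_clique E K \<and> card (P - {p}) + card R \<le> card K + card P0"
        apply (rule less.hyps[OF lt])
        using fP fR disj cP cR ch unfolding is_clique_def by auto
      then obtain P0 \<mu> K where IH: "P0 \<subseteq> P - {p}" "inj_on \<mu> P0" "\<mu> ` P0 \<subseteq> R" "\<forall>p\<in>P0. \<not> E p (\<mu> p)"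
        "K \<subseteq> (P - {p}) \<union> R" "is_clique E K" "card (P - {p}) + card R \<le> card K + card P0" by blast
      have pK: "p \<notin> K" using IH(5) disj p by auto
      have fK: "finite K" using IH(5) fP fR finite_subset by auto
      have cl: "is_clique E (insert p K)"
        unfolding is_clique_def
      proof (intro ballI impI)
        fix x y assume xy: "x \<in> insert p K" "y \<in> insert p K" "x \<noteq> y"
        have adjp: "E p z" if "z \<in> K" "z \<noteq> p" for z
          using that IH(5) p cP unfolding is_clique_def by auto
        show "E x y"
        proof (cases "x = p")
          case True then show ?thesis using xy adjp by auto
        next
          case False
          show ?thesis
          proof (cases "y = p")
            case True then show ?thesis using xy False adjp sym by auto
          next
            case False2: False
            then show ?thesis using xy False IH(6) unfolding is_clique_def by auto
          qed
        qed
      qed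
      have "card (insert p K) = card K + 1" using pK fK by simp
      moreover have "card (P - {p}) = card P - 1" using p fP by simp
      moreover have "card P \<ge> 1" using p fP by (metis One_nat_def Suc_leI card_gt_0_iff empty_iff)
      ultimately have "card P + card R \<le> card (insert p K) + card P0" using IH(7) by linarith
      then show ?thesis using IH cl p by (intro exI[of _ P0] exI[of _ \<mu>] exI[of _ "insert p K"]) auto
    next
      case False
      define g where "g q = card (nbhd E q \<inter> R)" for q
      have fimg: "finite (g ` P)" using fP by simp
      have "Max (g ` P) \<in> g ` P" using fimg Pne by (intro Max_in) auto
      then obtain p where p: "p \<in> P" "g p = Max (g ` P)" by auto
      have pmax: "g q \<le> g p" if "q \<in> P" for q using p fimg that by simp
      obtain r0 where r0: "r0 \<in> R" "\<not> E p r0" using False p by auto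
      have r0none: "\<not> E q r0" if q: "q \<in> P" for q
      proof -
        have "nbhd E q \<inter> R \<subseteq> nbhd E p \<inter> R"
        proof -
          have "nbhd E q \<inter> R \<subseteq> nbhd E p \<inter> R \<or> nbhd E p \<inter> R \<subseteq> nbhd E q \<inter> R" using ch q p by blast
          moreover have "nbhd E p \<inter> R \<subseteq> nbhd E q \<inter> R \<Longrightarrow> nbhd E p \<inter> R = nbhd E q \<inter> R"
            using card_seteq[of "nbhd E q \<inter> R" "nbhd E p \<inter> R"] pmax[OF q] fR g_def by auto
          ultimately show ?thesis by auto
        qed
        then show ?thesis using r0 unfolding nbhd_def by auto
      qed
      have lt: "card P + card (R - {r0}) < card P + card R"
        using card_Diff1_less[OF fR r0(1)] by simp
      have "\<exists>P0 \<mu> K. P0 \<subseteq> P \<and> inj_on \<mu> P0 \<and> \<mu> ` P0 \<subseteq> R - {r0} \<and> (\<forall>p\<in>P0. \<not> E p (\<mu> p)) \<and>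
       K \<subseteq> P \<union> (R - {r0}) \<and> is_clique E K \<and> card P + card (R - {r0}) \<le> card K + card P0"
        apply (rule less.hyps[OF lt])
        using fP fR disj cP cR unfolding is_clique_def apply auto[5]
        using ch by blast
      then obtain P0 \<mu> K where IH: "P0 \<subseteq> P" "inj_on \<mu> P0" "\<mu> ` P0 \<subseteq> R - {r0}" "\<forall>p\<in>P0. \<not> E p (\<mu> p)"
        "K \<subseteq> P \<union> (R - {r0})" "is_clique E K" "card P + card (R - {r0}) \<le> card K + card P0" by blast
      have cRr: "card (R - {r0}) = card R - 1" using r0 fR by simp
      have cR1: "card R \<ge> 1" using r0 fR by (metis One_nat_def Suc_leI card_gt_0_iff empty_iff)
      show ?thesis
      proof (cases "P0 = P")
        case True
        then show ?thesis using IH cR by (intro exI[of _ P0] exI[of _ \<mu>] exI[of _ R]) auto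
      next
        case False
        then obtain p1 where p1: "p1 \<in> P" "p1 \<notin> P0" using IH(1) by auto
        define \<mu>' where "\<mu>' = \<mu>(p1 := r0)"
        have fP0: "finite P0" using IH(1) fP finite_subset by auto
        have inj': "inj_on \<mu>' (insert p1 P0)"
          unfolding inj_on_def \<mu>'_def
        proof (intro ballI impI)
          fix x y assume xy: "x \<in> insert p1 P0" "y \<in> insert p1 P0" "(\<mu>(p1 := r0)) x = (\<mu>(p1 := r0)) y"
          show "x = y"
          proof (cases "x = p1"; cases "y = p1")
            assume "x = p1" "y = p1" then show ?thesis by simp
          next
            assume a: "x = p1" "y \<noteq> p1"
            then have "\<mu> y = r0" using xy by simp
            moreover have "\<mu> y \<in> R - {r0}" using IH(3) xy a by auto
            ultimately show ?thesis by simp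
          next
            assume a: "x \<noteq> p1" "y = p1"
            then have "\<mu> x = r0" using xy by simp
            moreover have "\<mu> x \<in> R - {r0}" using IH(3) xy a by auto
            ultimately show ?thesis by simp
          next
            assume a: "x \<noteq> p1" "y \<noteq> p1"
            then show ?thesis using xy IH(2) by (auto dest: inj_onD)
          qed
        qed
        have img': "\<mu>' ` (insert p1 P0) \<subseteq> R" using IH(3) r0 p1 \<mu>'_def by auto
        have ne': "\<forall>p\<in>insert p1 P0. \<not> E p (\<mu>' p)" using IH(4) r0none p1 \<mu>'_def by auto
        have "card (insert p1 P0) = card P0 + 1" using p1 fP0 by simp
        then have "card P + card R \<le> card K + card (insert p1 P0)" using IH(7) cRr cR1 by linarith
        then show ?thesis using IH p1 inj' img' ne'
          by (intro exI[of _ "insert p1 P0"] exI[of _ \<mu>'] exI[of _ K]) auto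
      qed
    qed
  qed
qed


lemma arith_core:
  fixes a b q2 r2 q3 r3 f m1 m2 m3 w k :: int
  assumes "0 \<le> a" "0 \<le> b" "0 \<le> q2" "0 \<le> r2" "0 \<le> q3" "0 \<le> r3" "0 \<le> f"
    "0 \<le> m1" "0 \<le> m2" "0 \<le> m3" "5*w \<le> 4*k"
    "a+b \<le> w" "a+f \<le> w" "b+q2+r2 \<le> w+m1" "r2+r3+q2+q3 \<le> w+m2" "q3+f+r3 \<le> w+m3"
    "m1 \<le> b" "m1 \<le> q2" "m2 \<le> r2" "m2 \<le> r3" "m3 \<le> q3" "m3 \<le> f"
  shows "\<exists>sB sC sR3 sF. a\<le>sB \<and> sB+b\<le>k \<and> sB+b\<le>sC+m1 \<and> sC+q2+r2\<le>sB+k \<and>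
     sC+q2+r2\<le>sR3+m2 \<and> sR3+r3+q3\<le>sC+k \<and> sR3+r3+q3\<le>sF+m3 \<and> sF+f\<le>sR3+k \<and>
     k+a\<le>sF \<and> sF+f\<le>2*k"
proof -
  define sF where "sF = max (a+b-m1+q2+r2-m2+r3+q3-m3) (k+a)"
  define sR3 where "sR3 = max (a+b-m1+q2+r2-m2) (sF-k+f)"
  define sC where "sC = max (a+b-m1) (sR3-k+r3+q3)"
  define sB where "sB = max a (sC-k+q2+r2)"
  have F1: "sF \<ge> a+b-m1+q2+r2-m2+r3+q3-m3" "sF \<ge> k+a"
    "sF = a+b-m1+q2+r2-m2+r3+q3-m3 \<or> sF = k+a" unfolding sF_def by auto
  have F2: "sR3 \<ge> a+b-m1+q2+r2-m2" "sR3 \<ge> sF-k+f" "sR3 = a+b-m1+q2+r2-m2 \<or> sR3 = sF-k+f"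
    unfolding sR3_def by auto
  have F3: "sC \<ge> a+b-m1" "sC \<ge> sR3-k+r3+q3" "sC = a+b-m1 \<or> sC = sR3-k+r3+q3"
    unfolding sC_def by auto
  have F4: "sB \<ge> a" "sB \<ge> sC-k+q2+r2" "sB = a \<or> sB = sC-k+q2+r2"
    unfolding sB_def by auto
  have g1: "sF+f\<le>2*k" using F1(3) assms by linarith
  have g2: "sR3+r3+q3\<le>sF+m3" using F2(3) F1 assms by linarith
  have g3: "sF+f\<le>sR3+k" using F2 by linarith
  have g4: "sR3 + r3 + q3 \<le> sC + k" using F3 by linarith
  have g5: "sC+q2+r2\<le>sR3+m2" using F3(3) F2 assms by linarith
  have g6: "sC+q2+r2\<le>sB+k" using F4 by linarith
  have g7: "sB+b\<le>sC+m1" using F4(3) F3 assms by linarith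
  have g8: "sR3 \<le> 2*k - f" using F2(3) g1 assms F1 by linarith
  have g9: "sC \<le> 3*k - f - r3 - q3" using F3(3) g8 assms by linarith
  have w0: "0 \<le> w" using assms by linarith
  have g10: "sB+b\<le>k"
    apply (insert F1(3) F2(3) F3(3) F4(3) assms w0)
    apply (elim disjE)
    apply linarith+
    done
  show ?thesis using F4 g1 g2 g3 g4 g5 g6 g7 g10 F1 by blast
qed
lemma clique_union:
  assumes sym: "\<forall>x y. E x y \<longrightarrow> E y x" and "is_clique E A" "is_clique E B" "\<forall>a\<in>A. \<forall>b\<in>B. E a b"
  shows "is_clique E (A \<union> B)"
  using assms unfolding is_clique_def by blast

lemma ok_flip:
  assumes "\<forall>x y. E x y \<longrightarrow> E y x" "\<forall>u\<in>X. \<forall>v\<in>Y. E u v \<longrightarrow> c u \<noteq> c v"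
  shows "\<forall>u\<in>Y. \<forall>v\<in>X. E u v \<longrightarrow> c u \<noteq> c v"
  using assms by metis


lemma same_ok:
  assumes "inj_on g X" "\<And>v. v \<in> X \<Longrightarrow> col v = g v" "\<And>u v. E u v \<Longrightarrow> u \<noteq> v"
  shows "\<forall>u\<in>X. \<forall>v\<in>X. E u v \<longrightarrow> col u \<noteq> col v"
proof (intro ballI impI)
  fix u v assume "u \<in> X" "v \<in> X" "E u v"
  then show "col u \<noteq> col v" using assms inj_onD[OF assms(1)] by metis
qed

lemma disj_ok:
  assumes "g ` X \<subseteq> SX" "h ` Y \<subseteq> SY" "SX \<inter> SY = {}"
    "\<And>v. v \<in> X \<Longrightarrow> col v = g v" "\<And>v. v \<in> Y \<Longrightarrow> col v = h v"
  shows "\<forall>u\<in>X. \<forall>v\<in>Y. E u v \<longrightarrow> col u \<noteq> col v"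
proof (intro ballI impI)
  fix u v assume uv: "u \<in> X" "v \<in> Y"
  have "g u \<in> SX" "h v \<in> SY" using uv assms(1,2) by auto
  then show "col u \<noteq> col v" using assms(3,4,5) uv by auto
qed

lemma gr_ok:
  assumes "\<forall>p\<in>X. \<forall>r\<in>Y. g p = h r \<longrightarrow> \<not> E p r"
    "\<And>v. v \<in> X \<Longrightarrow> col v = g v" "\<And>v. v \<in> Y \<Longrightarrow> col v = h v"
  shows "\<forall>u\<in>X. \<forall>v\<in>Y. E u v \<longrightarrow> col u \<noteq> col v"
  using assms by metis

lemma ac_ok:
  assumes "\<forall>a\<in>X. \<forall>b\<in>Y. \<not> E a b"
  shows "\<forall>u\<in>X. \<forall>v\<in>Y. E u v \<longrightarrow> col u \<noteq> col v"
  using assms by blast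

lemma rng_ok:
  assumes "\<And>v. v \<in> X \<Longrightarrow> col v = g v" "g ` X \<subseteq> S" "\<And>c. c \<in> S \<Longrightarrow> c < k"
  shows "\<forall>v\<in>X. col v < k"
  using assms by auto

theorem theorem5p13:
  fixes V :: "'a set" and E :: "'a \<Rightarrow> 'a \<Rightarrow> bool"
  assumes "simple_graph V E"
    and "is_band V E"
  shows "int (chromatic_number V E) \<le> \<lceil>5 / 4 * real (clique_number V E)\<rceil>"
proof -
  have finV: "finite V" and sym: "\<forall>x y. E x y \<longrightarrow> E y x" and irr: "\<forall>x. \<not> E x x"
    using assms(1) unfolding simple_graph_def by auto
  define w where "w = clique_number V E"
  have cl_le: "card K \<le> w" if "K \<subseteq> V" "is_clique E K" for K
  proof -
    have "{card K |K. K \<subseteq> V \<and> is_clique E K} \<subseteq> card ` Pow V" by auto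
    then have fin: "finite {card K |K. K \<subseteq> V \<and> is_clique E K}"
      using finV finite_subset by blast
    show ?thesis unfolding w_def clique_number_def
      by (rule Max_ge[OF fin]) (use that in blast)
  qed
  show ?thesis
  proof (cases "V = {}")
    case True
    have "proper_colouring V E 0 (\<lambda>_. 0)" unfolding proper_colouring_def using True by simp
    then have "\<exists>c. proper_colouring V E 0 c" by blast
    then have "chromatic_number V E \<le> 0" unfolding chromatic_number_def by (rule Least_le)
    then show ?thesis by simp
  next
    case Vne: False
    then obtain v0 where "v0 \<in> V" by auto
    then have "card {v0} \<le> w" using cl_le[of "{v0}"] unfolding is_clique_def by auto
    then have w1: "w \<ge> 1" by simp
    define k where "k = (5 * w + 3) div 4"
    have k1: "5 * w \<le> 4 * k" "4 * k \<le> 5 * w + 3" unfolding k_def by linarith+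
    have kpos: "k > 0" using k1 w1 by linarith
    have wk: "w \<le> k" using k1 by linarith
    define KK where "KK = int k"
    have KKpos: "0 < KK" using kpos KK_def by simp
    obtain Q1 Q2 Q3 Q4 Q5 R2 R3 where
     VU: "V = Q1 \<union> Q2 \<union> Q3 \<union> Q4 \<union> Q5 \<union> R2 \<union> R3" and
     dj: "Q1 \<inter> Q2 = {}" "Q1 \<inter> Q3 = {}" "Q1 \<inter> Q4 = {}" "Q1 \<inter> Q5 = {}" "Q1 \<inter> R2 = {}" "Q1 \<inter> R3 = {}"
     "Q2 \<inter> Q3 = {}" "Q2 \<inter> Q4 = {}" "Q2 \<inter> Q5 = {}" "Q2 \<inter> R2 = {}" "Q2 \<inter> R3 = {}"
     "Q3 \<inter> Q4 = {}" "Q3 \<inter> Q5 = {}" "Q3 \<inter> R2 = {}" "Q3 \<inter> R3 = {}"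
     "Q4 \<inter> Q5 = {}" "Q4 \<inter> R2 = {}" "Q4 \<inter> R3 = {}"
     "Q5 \<inter> R2 = {}" "Q5 \<inter> R3 = {}" "R2 \<inter> R3 = {}" and
     cq: "is_clique E Q1" "is_clique E Q2" "is_clique E Q3" "is_clique E Q4" "is_clique E Q5"
     "is_clique E R2" "is_clique E R3" and
     ct: "complete_to E Q5 (Q1 \<union> Q4)"
     "complete_to E R2 (Q1 \<union> Q2 \<union> Q3)"
     "complete_to E R3 (Q2 \<union> Q3 \<union> Q4)"
     "complete_to E Q2 Q3" and
     at: "anticomplete_to E Q1 (Q3 \<union> R3 \<union> Q4)"
     "anticomplete_to E Q4 (Q1 \<union> Q2 \<union> R2)"
     "anticomplete_to E Q5 (Q2 \<union> R2 \<union> Q3 \<union> R3)" and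
     gr: "graded E Q1 Q2" "graded E Q3 Q4" "graded E R2 R3"
      apply (insert assms(2)[unfolded is_band_def])
      apply (elim exE conjE)
      apply (rule that)
      apply assumption+
      done
    have cmp: "\<forall>a\<in>Q5. \<forall>b\<in>Q1. E a b" "\<forall>a\<in>Q5. \<forall>b\<in>Q4. E a b"
      "\<forall>a\<in>R2. \<forall>b\<in>Q1. E a b" "\<forall>a\<in>R2. \<forall>b\<in>Q2. E a b" "\<forall>a\<in>R2. \<forall>b\<in>Q3. E a b"
      "\<forall>a\<in>R3. \<forall>b\<in>Q2. E a b" "\<forall>a\<in>R3. \<forall>b\<in>Q3. E a b" "\<forall>a\<in>R3. \<forall>b\<in>Q4. E a b"
      "\<forall>a\<in>Q2. \<forall>b\<in>Q3. E a b"
      using ct unfolding complete_to_def by blast+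
    have acm: "\<forall>a\<in>Q1. \<forall>b\<in>Q3. \<not> E a b" "\<forall>a\<in>Q1. \<forall>b\<in>R3. \<not> E a b" "\<forall>a\<in>Q1. \<forall>b\<in>Q4. \<not> E a b"
      "\<forall>a\<in>Q4. \<forall>b\<in>Q2. \<not> E a b" "\<forall>a\<in>Q4. \<forall>b\<in>R2. \<not> E a b"
      "\<forall>a\<in>Q5. \<forall>b\<in>Q2. \<not> E a b" "\<forall>a\<in>Q5. \<forall>b\<in>R2. \<not> E a b" "\<forall>a\<in>Q5. \<forall>b\<in>Q3. \<not> E a b"
      "\<forall>a\<in>Q5. \<forall>b\<in>R3. \<not> E a b"
      using at unfolding anticomplete_to_def by blast+
    have sub: "Q1 \<subseteq> V" "Q2 \<subseteq> V" "Q3 \<subseteq> V" "Q4 \<subseteq> V" "Q5 \<subseteq> V" "R2 \<subseteq> V" "R3 \<subseteq> V"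
      using VU by blast+
    have fin: "finite Q1" "finite Q2" "finite Q3" "finite Q4" "finite Q5" "finite R2" "finite R3"
      using sub finV finite_subset by blast+
    have szw: "card Q1 \<le> w" "card Q2 \<le> w" "card Q3 \<le> w" "card Q4 \<le> w" "card Q5 \<le> w"
      "card R2 \<le> w" "card R3 \<le> w" using cl_le sub cq by blast+
    obtain P1 \<mu>1 K1 where KL1: "P1 \<subseteq> Q1" "inj_on \<mu>1 P1" "\<mu>1 ` P1 \<subseteq> Q2" "\<forall>p\<in>P1. \<not> E p (\<mu>1 p)"
       "K1 \<subseteq> Q1 \<union> Q2" "is_clique E K1" "card Q1 + card Q2 \<le> card K1 + card P1"
      using chain_koenig[OF sym, of Q1 Q2] fin cq gr(1) unfolding graded_def by blast
    obtain P2 \<mu>2 K2 where KL2: "P2 \<subseteq> R2" "inj_on \<mu>2 P2" "\<mu>2 ` P2 \<subseteq> R3" "\<forall>p\<in>P2. \<not> E p (\<mu>2 p)"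
       "K2 \<subseteq> R2 \<union> R3" "is_clique E K2" "card R2 + card R3 \<le> card K2 + card P2"
      using chain_koenig[OF sym, of R2 R3] fin cq gr(3) unfolding graded_def by blast

    obtain P3 \<mu>3 K3 where KL3: "P3 \<subseteq> Q3" "inj_on \<mu>3 P3" "\<mu>3 ` P3 \<subseteq> Q4" "\<forall>p\<in>P3. \<not> E p (\<mu>3 p)"
       "K3 \<subseteq> Q3 \<union> Q4" "is_clique E K3" "card Q3 + card Q4 \<le> card K3 + card P3"
      using chain_koenig[OF sym, of Q3 Q4] fin cq gr(2) unfolding graded_def by blast
    have fK: "finite K1" "finite K2" "finite K3" using KL1(5) KL2(5) KL3(5) fin finite_subset by blast+
    have fP: "finite P1" "finite P2" "finite P3" using KL1(1) KL2(1) KL3(1) fin finite_subset by blast+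
    have w1': "card K1 + card R2 \<le> w"
    proof -
      have cu: "is_clique E (K1 \<union> R2)"
      proof (rule clique_union[OF sym KL1(6) cq(6)])
        show "\<forall>a\<in>K1. \<forall>b\<in>R2. E a b"
        proof (intro ballI)
          fix x y assume xy: "x \<in> K1" "y \<in> R2"
          then have "x \<in> Q1 \<or> x \<in> Q2" using KL1(5) by blast
          then have "E y x" using cmp(3) cmp(4) xy(2) by blast
          then show "E x y" using sym by blast
        qed
      qed
      have "card (K1 \<union> R2) \<le> w" by (rule cl_le) (use KL1(5) sub in blast, rule cu)
      moreover have "card (K1 \<union> R2) = card K1 + card R2"
        by (rule card_Un_disjoint[OF fK(1) fin(6)]) (use KL1(5) dj(5) dj(10) in blast)
      ultimately show ?thesis by linarith
    qed
    have w2': "card K2 + card Q2 + card Q3 \<le> w"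
    proof -
      have c23: "is_clique E (Q2 \<union> Q3)" by (rule clique_union[OF sym cq(2) cq(3) cmp(9)])
      have cu: "is_clique E (K2 \<union> (Q2 \<union> Q3))"
      proof (rule clique_union[OF sym KL2(6) c23])
        show "\<forall>a\<in>K2. \<forall>b\<in>Q2 \<union> Q3. E a b"
        proof (intro ballI)
          fix x y assume xy: "x \<in> K2" "y \<in> Q2 \<union> Q3"
          then have "x \<in> R2 \<or> x \<in> R3" using KL2(5) by blast
          then show "E x y" using cmp(4) cmp(5) cmp(6) cmp(7) xy(2) by blast
        qed
      qed
      have "card (K2 \<union> (Q2 \<union> Q3)) \<le> w" by (rule cl_le) (use KL2(5) sub in blast, rule cu)
      moreover have "card (Q2 \<union> Q3) = card Q2 + card Q3"
        by (rule card_Un_disjoint[OF fin(2) fin(3) dj(7)])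
      moreover have "card (K2 \<union> (Q2 \<union> Q3)) = card K2 + card (Q2 \<union> Q3)"
        by (rule card_Un_disjoint) (use fK(2) fin(2) fin(3) KL2(5) dj(10) dj(11) dj(14) dj(15) in blast)+
      ultimately show ?thesis by linarith
    qed
    have w3': "card K3 + card R3 \<le> w"
    proof -
      have cu: "is_clique E (K3 \<union> R3)"
      proof (rule clique_union[OF sym KL3(6) cq(7)])
        show "\<forall>a\<in>K3. \<forall>b\<in>R3. E a b"
        proof (intro ballI)
          fix x y assume xy: "x \<in> K3" "y \<in> R3"
          then have "x \<in> Q3 \<or> x \<in> Q4" using KL3(5) by blast
          then have "E y x" using cmp(7) cmp(8) xy(2) by blast
          then show "E x y" using sym by blast
        qed
      qed
      have "card (K3 \<union> R3) \<le> w" by (rule cl_le) (use KL3(5) sub in blast, rule cu)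
      moreover have "card (K3 \<union> R3) = card K3 + card R3"
        by (rule card_Un_disjoint[OF fK(3) fin(7)]) (use KL3(5) dj(15) dj(18) in blast)
      ultimately show ?thesis by linarith
    qed
    have w4': "card Q5 + card Q1 \<le> w"
    proof -
      have cu: "is_clique E (Q5 \<union> Q1)" by (rule clique_union[OF sym cq(5) cq(1) cmp(1)])
      have "card (Q5 \<union> Q1) \<le> w" by (rule cl_le) (use sub in blast, rule cu)
      moreover have "card (Q5 \<union> Q1) = card Q5 + card Q1"
        by (rule card_Un_disjoint[OF fin(5) fin(1)]) (use dj(4) in blast)
      ultimately show ?thesis by linarith
    qed
    have w5': "card Q5 + card Q4 \<le> w"
    proof -
      have cu: "is_clique E (Q5 \<union> Q4)" by (rule clique_union[OF sym cq(5) cq(4) cmp(2)])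
      have "card (Q5 \<union> Q4) \<le> w" by (rule cl_le) (use sub in blast, rule cu)
      moreover have "card (Q5 \<union> Q4) = card Q5 + card Q4"
        by (rule card_Un_disjoint[OF fin(5) fin(4)]) (use dj(16) in blast)
      ultimately show ?thesis by linarith
    qed
    have mP: "card P1 \<le> card Q1" "card P1 \<le> card Q2" "card P2 \<le> card R2" "card P2 \<le> card R3"
       "card P3 \<le> card Q3" "card P3 \<le> card Q4"
    proof -
      show "card P1 \<le> card Q1" using KL1(1) fin card_mono by blast
      show "card P2 \<le> card R2" using KL2(1) fin card_mono by blast
      show "card P3 \<le> card Q3" using KL3(1) fin card_mono by blast
      have "card (\<mu>1 ` P1) = card P1" using KL1(2) by (simp add: card_image)
      then show "card P1 \<le> card Q2" using KL1(3) fin card_mono by metis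
      have "card (\<mu>2 ` P2) = card P2" using KL2(2) by (simp add: card_image)
      then show "card P2 \<le> card R3" using KL2(3) fin card_mono by metis
      have "card (\<mu>3 ` P3) = card P3" using KL3(2) by (simp add: card_image)
      then show "card P3 \<le> card Q4" using KL3(3) fin card_mono by metis
    qed
    define a where "a = int (card Q5)"
    define b where "b = int (card Q1)"
    define q2 where "q2 = int (card Q2)"
    define r2 where "r2 = int (card R2)"
    define q3 where "q3 = int (card Q3)"
    define r3 where "r3 = int (card R3)"
    define f where "f = int (card Q4)"
    define m1 where "m1 = int (card P1)"
    define m2 where "m2 = int (card P2)"
    define m3 where "m3 = int (card P3)"
    define ww where "ww = int w"
    have ar: "0 \<le> a" "0 \<le> b" "0 \<le> q2" "0 \<le> r2" "0 \<le> q3" "0 \<le> r3" "0 \<le> f"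
      "0 \<le> m1" "0 \<le> m2" "0 \<le> m3" "5*ww \<le> 4*KK"
      "a+b \<le> ww" "a+f \<le> ww" "b+q2+r2 \<le> ww+m1" "r2+r3+q2+q3 \<le> ww+m2" "q3+f+r3 \<le> ww+m3"
      "m1 \<le> b" "m1 \<le> q2" "m2 \<le> r2" "m2 \<le> r3" "m3 \<le> q3" "m3 \<le> f"
      unfolding a_def b_def q2_def r2_def q3_def r3_def f_def m1_def m2_def m3_def ww_def KK_def
      using k1 w1' w2' w3' w4' w5' KL1(7) KL2(7) KL3(7) mP by linarith+
    have lens: "a \<le> KK" "b \<le> KK" "q2 \<le> KK" "r2 \<le> KK" "q3 \<le> KK" "r3 \<le> KK" "f \<le> KK"
      unfolding a_def b_def q2_def r2_def q3_def r3_def f_def KK_def using szw wk by linarith+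
    obtain sB sC sR3 sF where S: "a\<le>sB" "sB+b\<le>KK" "sB+b\<le>sC+m1" "sC+q2+r2\<le>sB+KK"
      "sC+q2+r2\<le>sR3+m2" "sR3+r3+q3\<le>sC+KK" "sR3+r3+q3\<le>sF+m3" "sF+f\<le>sR3+KK"
      "KK+a\<le>sF" "sF+f\<le>2*KK"
      using arith_core[OF ar] by blast
    define XA where "XA = CS KK KK a"
    define XB where "XB = CS KK sB b"
    define XQ2 where "XQ2 = CS KK sC q2"
    define XR2 where "XR2 = CS KK (sC+q2) r2"
    define XR3 where "XR3 = CS KK sR3 r3"
    define XQ3 where "XQ3 = CS KK (sR3+r3) q3"
    define XF where "XF = CS KK sF f"
    have cards: "card XA = card Q5" "card XB = card Q1" "card XQ2 = card Q2" "card XR2 = card R2"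
      "card XR3 = card R3" "card XQ3 = card Q3" "card XF = card Q4"
      unfolding XA_def XB_def XQ2_def XR2_def XR3_def XQ3_def XF_def
      using cs_card[OF KKpos] ar lens
      unfolding a_def b_def q2_def r2_def q3_def r3_def f_def by simp_all
    have finX: "finite XA" "finite XB" "finite XQ2" "finite XR2" "finite XR3" "finite XQ3" "finite XF"
      unfolding XA_def XB_def XQ2_def XR2_def XR3_def XQ3_def XF_def by (simp_all add: cs_finite)
    have disj: "XB \<inter> XA = {}" "XA \<inter> XF = {}" "XB \<inter> XR2 = {}" "XQ2 \<inter> XR2 = {}"
      "XR2 \<inter> XQ3 = {}" "XQ2 \<inter> XR3 = {}" "XR3 \<inter> XQ3 = {}" "XR3 \<inter> XF = {}" "XQ2 \<inter> XQ3 = {}"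
      unfolding XA_def XB_def XQ2_def XR2_def XR3_def XQ3_def XF_def
      by (rule cs_disj[OF KKpos]; use S ar lens in linarith)+
    have ovl: "card (XB \<inter> XQ2) \<le> card P1" "card (XR2 \<inter> XR3) \<le> card P2" "card (XQ3 \<inter> XF) \<le> card P3"
    proof -
      have "card (XB \<inter> XQ2) \<le> nat (sB + b - sC)"
        unfolding XB_def XQ2_def by (rule cs_ov[OF KKpos]) (use S ar lens in linarith)+
      then show "card (XB \<inter> XQ2) \<le> card P1" using S(3) m1_def by linarith
      have "card (XR2 \<inter> XR3) \<le> nat (sC + q2 + r2 - sR3)"
        unfolding XR2_def XR3_def using cs_ov[OF KKpos, of "sC+q2" sR3 r3 r2] S ar lens
        by (simp add: algebra_simps)
      then show "card (XR2 \<inter> XR3) \<le> card P2" using S(5) m2_def by linarith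
      have "card (XQ3 \<inter> XF) \<le> nat (sR3 + r3 + q3 - sF)"
        unfolding XQ3_def XF_def using cs_ov[OF KKpos, of "sR3+r3" sF f q3] S ar lens
        by (simp add: algebra_simps)
      then show "card (XQ3 \<inter> XF) \<le> card P3" using S(7) m3_def by linarith
    qed
    have ex12: "\<exists>c1 c2. inj_on c1 Q1 \<and> c1 ` Q1 \<subseteq> XB \<and> inj_on c2 Q2 \<and> c2 ` Q2 \<subseteq> XQ2 \<and>
        (\<forall>p\<in>Q1. \<forall>r\<in>Q2. c1 p = c2 r \<longrightarrow> \<not> E p r)"
      by (rule real_pair[where E=E, OF fin(1) fin(2) KL1(1-4) finX(2) finX(3) cards(2) cards(3) ovl(1)])
    obtain c1 c2 where C12: "inj_on c1 Q1" "c1 ` Q1 \<subseteq> XB" "inj_on c2 Q2" "c2 ` Q2 \<subseteq> XQ2"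
        "\<forall>p\<in>Q1. \<forall>r\<in>Q2. c1 p = c2 r \<longrightarrow> \<not> E p r"
      using ex12 by (elim exE conjE) (rule that)
    have ex23: "\<exists>d2 d3. inj_on d2 R2 \<and> d2 ` R2 \<subseteq> XR2 \<and> inj_on d3 R3 \<and> d3 ` R3 \<subseteq> XR3 \<and>
        (\<forall>p\<in>R2. \<forall>r\<in>R3. d2 p = d3 r \<longrightarrow> \<not> E p r)"
      by (rule real_pair[where E=E, OF fin(6) fin(7) KL2(1-4) finX(4) finX(5) cards(4) cards(5) ovl(2)])
    obtain d2 d3 where D23: "inj_on d2 R2" "d2 ` R2 \<subseteq> XR2" "inj_on d3 R3" "d3 ` R3 \<subseteq> XR3"
        "\<forall>p\<in>R2. \<forall>r\<in>R3. d2 p = d3 r \<longrightarrow> \<not> E p r"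
      using ex23 by (elim exE conjE) (rule that)
    have ex34: "\<exists>c3 c4. inj_on c3 Q3 \<and> c3 ` Q3 \<subseteq> XQ3 \<and> inj_on c4 Q4 \<and> c4 ` Q4 \<subseteq> XF \<and>
        (\<forall>p\<in>Q3. \<forall>r\<in>Q4. c3 p = c4 r \<longrightarrow> \<not> E p r)"
      by (rule real_pair[where E=E, OF fin(3) fin(4) KL3(1-4) finX(6) finX(7) cards(6) cards(7) ovl(3)])
    obtain c3 c4 where C34: "inj_on c3 Q3" "c3 ` Q3 \<subseteq> XQ3" "inj_on c4 Q4" "c4 ` Q4 \<subseteq> XF"
        "\<forall>p\<in>Q3. \<forall>r\<in>Q4. c3 p = c4 r \<longrightarrow> \<not> E p r"
      using ex34 by (elim exE conjE) (rule that)
    have ex5: "\<exists>c5. inj_on c5 Q5 \<and> c5 ` Q5 \<subseteq> XA" by (rule real0[OF fin(5) finX(1) cards(1)])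
    obtain c5 where C5: "inj_on c5 Q5" "c5 ` Q5 \<subseteq> XA"
      using ex5 by (elim exE conjE) (rule that)
    define col where "col v = (if v \<in> Q1 then c1 v else if v \<in> Q2 then c2 v else if v \<in> Q3 then c3 v
      else if v \<in> Q4 then c4 v else if v \<in> Q5 then c5 v else if v \<in> R2 then d2 v else d3 v)" for v
    have ce1: "\<And>v. v \<in> Q1 \<Longrightarrow> col v = c1 v" unfolding col_def by simp
    have ce2: "\<And>v. v \<in> Q2 \<Longrightarrow> col v = c2 v" unfolding col_def using dj(1) by auto
    have ce3: "\<And>v. v \<in> Q3 \<Longrightarrow> col v = c3 v" unfolding col_def using dj(2) dj(7) by auto
    have ce4: "\<And>v. v \<in> Q4 \<Longrightarrow> col v = c4 v" unfolding col_def using dj(3) dj(8) dj(12) by auto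
    have ce5: "\<And>v. v \<in> Q5 \<Longrightarrow> col v = c5 v" unfolding col_def using dj(4) dj(9) dj(13) dj(16) by auto
    have ce6: "\<And>v. v \<in> R2 \<Longrightarrow> col v = d2 v" unfolding col_def
      using dj(5) dj(10) dj(14) dj(17) dj(19) by auto
    have ce7: "\<And>v. v \<in> R3 \<Longrightarrow> col v = d3 v" unfolding col_def
      using dj(6) dj(11) dj(15) dj(18) dj(20) dj(21) by auto
    have ne: "\<And>u v. E u v \<Longrightarrow> u \<noteq> v" using irr by metis
    have s1: "\<forall>u\<in>Q1. \<forall>v\<in>Q1. E u v \<longrightarrow> col u \<noteq> col v" by (rule same_ok[OF C12(1) ce1 ne])
    have s2: "\<forall>u\<in>Q2. \<forall>v\<in>Q2. E u v \<longrightarrow> col u \<noteq> col v" by (rule same_ok[OF C12(3) ce2 ne])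
    have s3: "\<forall>u\<in>Q3. \<forall>v\<in>Q3. E u v \<longrightarrow> col u \<noteq> col v" by (rule same_ok[OF C34(1) ce3 ne])
    have s4: "\<forall>u\<in>Q4. \<forall>v\<in>Q4. E u v \<longrightarrow> col u \<noteq> col v" by (rule same_ok[OF C34(3) ce4 ne])
    have s5: "\<forall>u\<in>Q5. \<forall>v\<in>Q5. E u v \<longrightarrow> col u \<noteq> col v" by (rule same_ok[OF C5(1) ce5 ne])
    have s6: "\<forall>u\<in>R2. \<forall>v\<in>R2. E u v \<longrightarrow> col u \<noteq> col v" by (rule same_ok[OF D23(1) ce6 ne])
    have s7: "\<forall>u\<in>R3. \<forall>v\<in>R3. E u v \<longrightarrow> col u \<noteq> col v" by (rule same_ok[OF D23(3) ce7 ne])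
    have p1: "\<forall>u\<in>Q1. \<forall>v\<in>Q5. E u v \<longrightarrow> col u \<noteq> col v" by (rule disj_ok[OF C12(2) C5(2) disj(1) ce1 ce5])
    have p2: "\<forall>u\<in>Q5. \<forall>v\<in>Q4. E u v \<longrightarrow> col u \<noteq> col v" by (rule disj_ok[OF C5(2) C34(4) disj(2) ce5 ce4])
    have p3: "\<forall>u\<in>Q1. \<forall>v\<in>R2. E u v \<longrightarrow> col u \<noteq> col v" by (rule disj_ok[OF C12(2) D23(2) disj(3) ce1 ce6])
    have p4: "\<forall>u\<in>Q2. \<forall>v\<in>R2. E u v \<longrightarrow> col u \<noteq> col v" by (rule disj_ok[OF C12(4) D23(2) disj(4) ce2 ce6])
    have p5: "\<forall>u\<in>R2. \<forall>v\<in>Q3. E u v \<longrightarrow> col u \<noteq> col v" by (rule disj_ok[OF D23(2) C34(2) disj(5) ce6 ce3])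
    have p6: "\<forall>u\<in>Q2. \<forall>v\<in>R3. E u v \<longrightarrow> col u \<noteq> col v" by (rule disj_ok[OF C12(4) D23(4) disj(6) ce2 ce7])
    have p7: "\<forall>u\<in>R3. \<forall>v\<in>Q3. E u v \<longrightarrow> col u \<noteq> col v" by (rule disj_ok[OF D23(4) C34(2) disj(7) ce7 ce3])
    have p8: "\<forall>u\<in>R3. \<forall>v\<in>Q4. E u v \<longrightarrow> col u \<noteq> col v" by (rule disj_ok[OF D23(4) C34(4) disj(8) ce7 ce4])
    have p9: "\<forall>u\<in>Q2. \<forall>v\<in>Q3. E u v \<longrightarrow> col u \<noteq> col v" by (rule disj_ok[OF C12(4) C34(2) disj(9) ce2 ce3])
    have g1: "\<forall>u\<in>Q1. \<forall>v\<in>Q2. E u v \<longrightarrow> col u \<noteq> col v" by (rule gr_ok[OF C12(5) ce1 ce2])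
    have g2: "\<forall>u\<in>R2. \<forall>v\<in>R3. E u v \<longrightarrow> col u \<noteq> col v" by (rule gr_ok[OF D23(5) ce6 ce7])
    have g3: "\<forall>u\<in>Q3. \<forall>v\<in>Q4. E u v \<longrightarrow> col u \<noteq> col v" by (rule gr_ok[OF C34(5) ce3 ce4])
    have a1: "\<forall>u\<in>Q1. \<forall>v\<in>Q3. E u v \<longrightarrow> col u \<noteq> col v" by (rule ac_ok[OF acm(1)])
    have a2: "\<forall>u\<in>Q1. \<forall>v\<in>R3. E u v \<longrightarrow> col u \<noteq> col v" by (rule ac_ok[OF acm(2)])
    have a3: "\<forall>u\<in>Q1. \<forall>v\<in>Q4. E u v \<longrightarrow> col u \<noteq> col v" by (rule ac_ok[OF acm(3)])
    have a4: "\<forall>u\<in>Q4. \<forall>v\<in>Q2. E u v \<longrightarrow> col u \<noteq> col v" by (rule ac_ok[OF acm(4)])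
    have a5: "\<forall>u\<in>Q4. \<forall>v\<in>R2. E u v \<longrightarrow> col u \<noteq> col v" by (rule ac_ok[OF acm(5)])
    have a6: "\<forall>u\<in>Q5. \<forall>v\<in>Q2. E u v \<longrightarrow> col u \<noteq> col v" by (rule ac_ok[OF acm(6)])
    have a7: "\<forall>u\<in>Q5. \<forall>v\<in>R2. E u v \<longrightarrow> col u \<noteq> col v" by (rule ac_ok[OF acm(7)])
    have a8: "\<forall>u\<in>Q5. \<forall>v\<in>Q3. E u v \<longrightarrow> col u \<noteq> col v" by (rule ac_ok[OF acm(8)])
    have a9: "\<forall>u\<in>Q5. \<forall>v\<in>R3. E u v \<longrightarrow> col u \<noteq> col v" by (rule ac_ok[OF acm(9)])
    note fl = ok_flip[OF sym]
    have r1: "\<forall>u\<in>Q1. \<forall>v\<in>V. E u v \<longrightarrow> col u \<noteq> col v"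
      unfolding VU using s1 g1 a1 a3 p1 p3 a2 by blast
    have r2: "\<forall>u\<in>Q2. \<forall>v\<in>V. E u v \<longrightarrow> col u \<noteq> col v"
      unfolding VU using fl[OF g1] s2 p9 fl[OF a4] fl[OF a6] p4 p6 by blast
    have r3: "\<forall>u\<in>Q3. \<forall>v\<in>V. E u v \<longrightarrow> col u \<noteq> col v"
      unfolding VU using fl[OF a1] fl[OF p9] s3 g3 fl[OF a8] fl[OF p5] fl[OF p7] by blast
    have r4: "\<forall>u\<in>Q4. \<forall>v\<in>V. E u v \<longrightarrow> col u \<noteq> col v"
      unfolding VU using fl[OF a3] a4 fl[OF g3] s4 fl[OF p2] a5 fl[OF p8] by blast
    have r5: "\<forall>u\<in>Q5. \<forall>v\<in>V. E u v \<longrightarrow> col u \<noteq> col v"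
      unfolding VU using fl[OF p1] a6 a8 p2 s5 a7 a9 by blast
    have r6: "\<forall>u\<in>R2. \<forall>v\<in>V. E u v \<longrightarrow> col u \<noteq> col v"
      unfolding VU using fl[OF p3] fl[OF p4] p5 fl[OF a5] fl[OF a7] s6 g2 by blast
    have r7: "\<forall>u\<in>R3. \<forall>v\<in>V. E u v \<longrightarrow> col u \<noteq> col v"
      unfolding VU using fl[OF a2] fl[OF p6] p7 p8 fl[OF a9] fl[OF g2] s7 by blast
    have proper: "\<forall>u\<in>V. \<forall>v\<in>V. E u v \<longrightarrow> col u \<noteq> col v"
      using r1 r2 r3 r4 r5 r6 r7 VU by blast
    have lt: "\<And>c s l. c \<in> CS KK s l \<Longrightarrow> c < k" using cs_lt[OF KKpos] KK_def by fastforce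
    have rg: "\<forall>v\<in>Q1. col v < k" "\<forall>v\<in>Q2. col v < k" "\<forall>v\<in>Q3. col v < k" "\<forall>v\<in>Q4. col v < k"
      "\<forall>v\<in>Q5. col v < k" "\<forall>v\<in>R2. col v < k" "\<forall>v\<in>R3. col v < k"
      unfolding XB_def
      using rng_ok[OF ce1 C12(2)[unfolded XB_def] lt] rng_ok[OF ce2 C12(4)[unfolded XQ2_def] lt]
        rng_ok[OF ce3 C34(2)[unfolded XQ3_def] lt] rng_ok[OF ce4 C34(4)[unfolded XF_def] lt]
        rng_ok[OF ce5 C5(2)[unfolded XA_def] lt] rng_ok[OF ce6 D23(2)[unfolded XR2_def] lt]
        rng_ok[OF ce7 D23(4)[unfolded XR3_def] lt] by auto
    have range: "\<forall>v\<in>V. col v < k" unfolding VU using rg by blast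
    have "proper_colouring V E k col" unfolding proper_colouring_def using proper range by blast
    then have "\<exists>c. proper_colouring V E k c" by blast
    then have "chromatic_number V E \<le> k" unfolding chromatic_number_def by (rule Least_le)
    moreover have "int k \<le> \<lceil>5 / 4 * real w\<rceil>"
    proof -
      have "real k - 1 < 5 / 4 * real w" using k1 by linarith
      then show ?thesis by (simp add: le_ceiling_iff)
    qed
    ultimately show ?thesis using w_def by linarith
  qed
qed

end
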